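(* Let $\mathbb X$ be a separable reflexive Banach space and $\mu\in\mathbb X$. Fix $\alpha\in(0,\tfrac12)$, $0<p<\alpha$ and $\varepsilon>0$. Let $\hat\mu_1,\ldots,\hat\mu_k$ be random elements of $\mathbb X$, and let $J\subseteq\{1,\ldots,k\}$ have $|J|=(1-\tau)k$, where $0\le\tau<\frac{\alpha-p}{1-p}$. Assume: - the $\hat\mu_j$, $j\in J$, are independent; - $\Pr(\|\hat\mu_j-\mu\|>\varepsilon)\le p$ for all $j\in J$; - the $\hat\mu_j$ with $j\notin J$ are arbitrary. Let $\hat\mu=\mathrm{med}(\hat\mu_1,\ldots,\hat\mu_k)$. Then $$\Pr\big(\|\hat\mu-\mu\|>C_\alpha\varepsilon\big)\le\exp\Big(-k(1-\tau)\,\psi\Big(\tfrac{\alpha-\tau}{1-\tau};p\Big)\Big).$$ Here $C_\alpha=\frac{2(1-\alpha)}{1-2\alpha}$ in general, and $C_\alpha=(1-\alpha)\sqrt{\frac1{1-2\alpha}}$ when $\mathbb X$ is a Hilbert space.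
   Context: $\mathrm{med}(x_1,\ldots,x_k)$ denotes a geometric median, i.e. any minimizer over $y\in\mathbb X$ of $\sum_{j=1}^k\|y-x_j\|$. For $0<p<a<\tfrac12$, $$\psi(a;p)=(1-a)\log\frac{1-a}{1-p}+a\log\frac{a}{p}.$$ *)

theory Defs
  imports "HOL-Probability.Probability"
begin

definition psi :: "real \<Rightarrow> real \<Rightarrow> real" where
  "psi a p = (1 - a) * ln ((1 - a) / (1 - p)) + a * ln (a / p)"

definition is_geom_median :: "nat \<Rightarrow> (nat \<Rightarrow> 'a::real_normed_vector) \<Rightarrow> 'a \<Rightarrow> bool" where
  "is_geom_median k x y \<longleftrightarrow> (\<forall>z. (\<Sum>j=1..k. norm (y - x j)) \<le> (\<Sum>j=1..k. norm (z - x j)))"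

definition separable_space_type :: "'a::metric_space itself \<Rightarrow> bool" where
  "separable_space_type _ \<longleftrightarrow> (\<exists>D::'a set. countable D \<and> closure D = UNIV)"

definition reflexive_space :: "'a::real_normed_vector itself \<Rightarrow> bool" where
  "reflexive_space _ \<longleftrightarrow>
     (\<forall>\<phi> :: ('a \<Rightarrow>\<^sub>L real) \<Rightarrow>\<^sub>L real. \<exists>x::'a. \<forall>f. blinfun_apply \<phi> f = blinfun_apply f x)"

definition hilbert_norm :: "'a::real_normed_vector itself \<Rightarrow> bool" where
  "hilbert_norm _ \<longleftrightarrow>
     (\<exists>ip :: 'a \<Rightarrow> 'a \<Rightarrow> real.
        (\<forall>x y. ip x y = ip y x) \<and>
        (\<forall>y. linear (\<lambda>x. ip x y)) \<and>
        (\<forall>x. x \<noteq> 0 \<longrightarrow> ip x x > 0) \<and>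
        (\<forall>x. norm x = sqrt (ip x x)))"

end

theory Submission
  imports Defs
begin


lemma chernoff_count:
  fixes X :: "nat \<Rightarrow> 'b \<Rightarrow> 'a::real_normed_vector"
  assumes P: "prob_space M" and fin: "finite J"
    and ind: "prob_space.indep_vars M (\<lambda>_. borel) X J"
    and bad: "\<And>j. j \<in> J \<Longrightarrow> measure M {\<omega> \<in> space M. norm (X j \<omega> - \<mu>) > \<epsilon>} \<le> p"
    and p0: "0 < p" and pa: "p < a" and a1: "a < 1"
  shows "{\<omega> \<in> space M. a * real (card J) \<le> real (card {j\<in>J. norm (X j \<omega> - \<mu>) > \<epsilon>})} \<in> sets M
         \<and> measure M {\<omega> \<in> space M. a * real (card J) \<le> real (card {j\<in>J. norm (X j \<omega> - \<mu>) > \<epsilon>})}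
           \<le> exp (- real (card J) * psi a p)"
proof -
  interpret prob_space M by fact
  have rvX[measurable]: "X j \<in> borel_measurable M" if "j \<in> J" for j
    using ind that unfolding indep_vars_def2 by auto
  define f :: "'a \<Rightarrow> real" where "f x = (if \<epsilon> < norm (x - \<mu>) then 1 else 0)" for x
  define U where "U = {x::'a. \<epsilon> < norm (x - \<mu>)}"
  have U[measurable]: "U \<in> sets borel" unfolding U_def
    by (intro borel_open open_Collect_less continuous_intros)
  have fU: "f = indicator U" unfolding f_def U_def by (auto simp: indicator_def)
  have fm[measurable]: "f \<in> borel_measurable borel" unfolding fU by measurable
  define Y where "Y j \<omega> = f (X j \<omega>)" for j \<omega>
  define S where "S \<omega> = (\<Sum>j\<in>J. Y j \<omega>)" for \<omega>
  have Sm[measurable]: "S \<in> borel_measurable M" unfolding S_def Y_def by measurable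
  have cnt: "real (card {j\<in>J. norm (X j \<omega> - \<mu>) > \<epsilon>}) = S \<omega>" for \<omega>
    unfolding S_def Y_def f_def using fin by (simp add: sum.If_cases Int_def)
  define n where "n = real (card J)"
  define l where "l = ln (a*(1-p)/(p*(1-a)))"
  have q: "a*(1-p)/(p*(1-a)) > 1" using p0 pa a1 by (simp add: field_simps)
  have l: "l > 0" unfolding l_def using q by simp
  have el: "exp l = a*(1-p)/(p*(1-a))" unfolding l_def using q by simp
  have single: "(\<integral>\<^sup>+x. ennreal (exp (l * Y j x)) \<partial>M) \<le> ennreal (1 - p + p * exp l)" if j: "j \<in> J" for j
  proof -
    define B where "B = {\<omega> \<in> space M. norm (X j \<omega> - \<mu>) > \<epsilon>}"
    have "B = X j -` U \<inter> space M" unfolding B_def U_def by auto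
    hence Bm: "B \<in> sets M" using j by simp
    have e1: "1 + ennreal (exp l - 1) = ennreal (exp l)"
    proof -
      have "ennreal (1 + (exp l - 1)) = ennreal 1 + ennreal (exp l - 1)"
        by (rule ennreal_plus) (use l in auto)
      thus ?thesis by simp
    qed
    have "(\<integral>\<^sup>+x. ennreal (exp (l * Y j x)) \<partial>M) = (\<integral>\<^sup>+x. 1 + ennreal (exp l - 1) * indicator B x \<partial>M)"
      by (intro nn_integral_cong) (auto simp: Y_def f_def B_def indicator_def e1)
    also have "\<dots> = (\<integral>\<^sup>+x. 1 \<partial>M) + (\<integral>\<^sup>+x. ennreal (exp l - 1) * indicator B x \<partial>M)"
      by (rule nn_integral_add) (use Bm in auto)
    also have "\<dots> = 1 + ennreal (exp l - 1) * ennreal (measure M B)"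
      using Bm by (simp add: nn_integral_cmult_indicator emeasure_eq_measure prob_space)
    also have "\<dots> \<le> 1 + ennreal (exp l - 1) * ennreal p"
      using bad[OF j] unfolding B_def[symmetric] by (intro add_left_mono mult_left_mono ennreal_leI) auto
    also have "\<dots> = ennreal (1 - p + p * exp l)"
    proof -
      have "ennreal (1 + (exp l - 1) * p) = ennreal 1 + ennreal ((exp l - 1) * p)"
        by (rule ennreal_plus) (use l p0 in auto)
      moreover have "ennreal ((exp l - 1) * p) = ennreal (exp l - 1) * ennreal p"
        by (rule ennreal_mult) (use l p0 in auto)
      ultimately show ?thesis by (simp add: algebra_simps)
    qed
    finally show ?thesis .
  qed
  have "ennreal (measure M {\<omega> \<in> space M. a * n \<le> S \<omega>}) = emeasure M {\<omega> \<in> space M. S \<omega> \<ge> a * n}"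
    by (simp add: emeasure_eq_measure)
  also have "\<dots> \<le> ennreal (exp (-l * (a*n))) * (\<integral>\<^sup>+x\<in>space M. exp (l * S x) \<partial>M)"
    by (intro Chernoff_ineq_nn_integral_ge l) auto
  also have "(\<integral>\<^sup>+x\<in>space M. exp (l * S x) \<partial>M) = (\<integral>\<^sup>+x. (\<Prod>j\<in>J. ennreal (exp (l * Y j x))) \<partial>M)"
    by (intro nn_integral_cong)
       (simp_all add: S_def sum_distrib_left exp_sum fin prod_ennreal)
  also have "\<dots> = (\<Prod>j\<in>J. \<integral>\<^sup>+x. ennreal (exp (l * Y j x)) \<partial>M)"
    unfolding Y_def
    by (intro indep_vars_nn_integral fin indep_vars_compose2[OF ind]) auto
  also have "ennreal (exp (-l * (a*n))) * \<dots> \<le> ennreal (exp (-l * (a*n))) * (\<Prod>j\<in>J. ennreal (1 - p + p * exp l))"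
    by (intro mult_left_mono prod_mono_ennreal single) auto
  also have "\<dots> = ennreal (exp (-l * (a*n)) * (1 - p + p * exp l) ^ card J)"
  proof -
    have nn: "0 \<le> 1 - p + p * exp l" using p0 pa a1 by (simp add: add_nonneg_nonneg)
    have "(\<Prod>j\<in>J. ennreal (1 - p + p * exp l)) = ennreal ((1 - p + p * exp l) ^ card J)"
      using nn by (simp add: ennreal_power del: ennreal_plus)
    thus ?thesis using nn by (simp add: ennreal_mult[symmetric] del: ennreal_plus)
  qed
  also have "exp (-l * (a*n)) * (1 - p + p * exp l) ^ card J = exp (- n * psi a p)"
  proof -
    have "1 - p + p * exp l = (1-p)/(1-a)" using el p0 pa a1 by (simp add: field_simps)
    hence "(1 - p + p * exp l) ^ card J = exp (n * ln ((1-p)/(1-a)))"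
    proof -
      have pos: "0 < (1-p)/(1-a)" using pa a1 by simp
      show ?thesis unfolding n_def \<open>1 - p + p * exp l = (1-p)/(1-a)\<close>
        by (subst exp_of_nat_mult) (use pos in simp)
    qed
    moreover have "psi a p = (1-a) * (- ln ((1-p)/(1-a))) + a * ln (a / p)"
      unfolding psi_def using p0 pa a1 by (simp add: ln_div)
    moreover have "l = ln a + ln (1-p) - ln p - ln (1-a)" unfolding l_def using p0 pa a1
      by (simp add: ln_div ln_mult)
    ultimately have L: "psi a p = (1-a) * (- ln ((1-p)/(1-a))) + a * ln (a / p)"
      and P: "(1 - p + p * exp l) ^ card J = exp (n * ln ((1-p)/(1-a)))"
      and LL: "l = ln a + ln (1-p) - ln p - ln (1-a)" by blast+
    have "-l * (a*n) + n * ln ((1-p)/(1-a)) = - n * psi a p"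
      unfolding L LL using p0 pa a1 by (simp add: ln_div algebra_simps)
    thus ?thesis unfolding P by (simp add: exp_add[symmetric])
  qed
  finally have A: "measure M {\<omega> \<in> space M. a * n \<le> S \<omega>} \<le> exp (- n * psi a p)"
    by (subst (asm) ennreal_le_iff) auto
  have B: "{\<omega> \<in> space M. a * n \<le> S \<omega>} \<in> sets M" by measurable
  show ?thesis unfolding cnt n_def[symmetric] by (rule conjI[OF B A])
qed

lemma reduce:
  fixes X :: "nat \<Rightarrow> 'b \<Rightarrow> 'a::real_normed_vector"
  assumes P: "prob_space M" and J: "J \<subseteq> {1..k}" and cJ: "real (card J) = (1 - \<tau>) * real k"
    and ind: "prob_space.indep_vars M (\<lambda>_. borel) X J"
    and bad: "\<And>j. j \<in> J \<Longrightarrow> measure M {\<omega> \<in> space M. norm (X j \<omega> - \<mu>) > \<epsilon>} \<le> p"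
    and p0: "0 < p" and pa: "p < \<alpha>" and a2: "\<alpha> < 1/2" and t0: "0 \<le> \<tau>" and tl: "\<tau> < (\<alpha> - p) / (1 - p)"
    and imp: "\<And>\<omega>. \<omega> \<in> space M \<Longrightarrow> c < norm (med \<omega> - \<mu>) \<Longrightarrow>
                real (card {j\<in>{1..k}. \<epsilon> < norm (X j \<omega> - \<mu>)}) > \<alpha> * k"
  shows "measure M {\<omega> \<in> space M. norm (med \<omega> - \<mu>) > c} \<le> exp (- real k * (1 - \<tau>) * psi ((\<alpha> - \<tau>) / (1 - \<tau>)) p)"
proof -
  interpret prob_space M by fact
  have p1: "p < 1" using pa a2 by simp
  have t1: "\<tau> < 1"
  proof -
    have "(\<alpha> - p) / (1 - p) < 1" using p1 pa a2 by (simp add: divide_less_eq)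
    thus ?thesis using tl by simp
  qed
  define a where "a = (\<alpha> - \<tau>) / (1 - \<tau>)"
  have pa': "p < a"
  proof -
    have "\<tau> * (1 - p) < \<alpha> - p" using tl p1 by (simp add: less_divide_eq)
    hence "p * (1 - \<tau>) < \<alpha> - \<tau>" by (simp add: algebra_simps)
    thus ?thesis unfolding a_def using t1 by (simp add: less_divide_eq)
  qed
  have a1: "a < 1" unfolding a_def using t1 pa a2 by (simp add: divide_less_eq)
  have finJ: "finite J" using J finite_subset by blast
  have aJ: "a * real (card J) = (\<alpha> - \<tau>) * real k" unfolding a_def cJ using t1 by simp
  note ch = chernoff_count[OF P finJ ind bad p0 pa' a1]
  have sub: "{\<omega> \<in> space M. norm (med \<omega> - \<mu>) > c} \<subseteq>
      {\<omega> \<in> space M. a * real (card J) \<le> real (card {j\<in>J. norm (X j \<omega> - \<mu>) > \<epsilon>})}"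
  proof (intro subsetI, elim CollectE conjE, intro CollectI conjI)
    fix \<omega> assume w: "\<omega> \<in> space M" "c < norm (med \<omega> - \<mu>)"
    show "\<omega> \<in> space M" by fact
    define SA where "SA = {j\<in>{1..k}. \<epsilon> < norm (X j \<omega> - \<mu>)}"
    define SJ where "SJ = {j\<in>J. \<epsilon> < norm (X j \<omega> - \<mu>)}"
    have fSJ: "finite SJ" using finJ unfolding SJ_def by simp
    have "SA \<subseteq> SJ \<union> ({1..k} - J)" unfolding SA_def SJ_def by auto
    hence "card SA \<le> card (SJ \<union> ({1..k} - J))" by (intro card_mono) (use fSJ in simp)
    also have "\<dots> \<le> card SJ + card ({1..k} - J)" by (rule card_Un_le)
    finally have n1: "card SA \<le> card SJ + card ({1..k} - J)" .
    have "card J \<le> card {1..k}" using J by (intro card_mono) auto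
    hence n2: "card J \<le> k" by simp
    have n4: "card ({1..k} - J) + card J = k"
      using card_Diff_subset[OF finJ J] n2 by simp
    have n3: "card SA + card J \<le> card SJ + k" using n1 n4 by linarith
    have r3: "real (card SA) + real (card J) \<le> real (card SJ) + real k"
      using n3 by (metis of_nat_add of_nat_le_iff)
    have r4: "real (card SA) > \<alpha> * k" using imp[OF w] unfolding SA_def .
    have e1: "(1 - \<tau>) * real k = real k - \<tau> * real k" by (simp add: algebra_simps)
    have e2: "(\<alpha> - \<tau>) * real k = \<alpha> * real k - \<tau> * real k" by (simp add: algebra_simps)
    have "(\<alpha> - \<tau>) * real k \<le> real (card SJ)" using r3 r4 cJ e1 e2 by linarith
    thus "a * real (card J) \<le> real (card {j\<in>J. norm (X j \<omega> - \<mu>) > \<epsilon>})"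
      unfolding aJ SJ_def by simp
  qed
  have "measure M {\<omega> \<in> space M. norm (med \<omega> - \<mu>) > c}
      \<le> measure M {\<omega> \<in> space M. a * real (card J) \<le> real (card {j\<in>J. norm (X j \<omega> - \<mu>) > \<epsilon>})}"
    by (rule finite_measure_mono[OF sub conjunct1[OF ch]])
  also have "\<dots> \<le> exp (- real (card J) * psi a p)" by (rule conjunct2[OF ch])
  also have "- real (card J) * psi a p = - real k * (1 - \<tau>) * psi a p" unfolding cJ by simp
  finally show ?thesis unfolding a_def .
qed



lemma arith_banach:
  fixes g b k \<alpha> r D :: real
  assumes "g + b = k" "k > 0" "0 < \<alpha>" "\<alpha> < 1/2" "r > 0" "b \<le> \<alpha> * k" "b \<ge> 0"
    and "0 \<le> g * (2*r - D) + b * D" "D > 2*(1-\<alpha>)/(1-2*\<alpha>) * r"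
  shows False
proof -
  have h: "D * (1 - 2*\<alpha>) > 2*(1-\<alpha>) * r" using assms(4,9) by (simp add: field_simps)
  have Dr: "D > r"
  proof (rule ccontr)
    assume "\<not> D > r"
    hence "D*(1-2*\<alpha>) \<le> r*(1-2*\<alpha>)" by (intro mult_right_mono) (use assms(4) in auto)
    moreover have "r*(1-2*\<alpha>) < 2*(1-\<alpha>)*r" using assms(5) by (simp add: algebra_simps)
    ultimately show False using h by linarith
  qed
  define e where "e = \<alpha> * k - b"
  have e: "e \<ge> 0" using assms unfolding e_def by simp
  have g: "g = (1-\<alpha>)*k + e" "b = \<alpha>*k - e" using assms(1) unfolding e_def by (auto simp: algebra_simps)
  have 1: "k * (D * (1 - 2*\<alpha>)) > k * (2*(1-\<alpha>) * r)" using h assms(2) by simp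
  have 2: "e * D \<ge> e * r" using Dr e by (simp add: mult_left_mono)
  show False using assms(8) 1 2 unfolding g by (simp add: algebra_simps)
qed

lemma gm_banach:
  fixes x :: "nat \<Rightarrow> 'a::real_normed_vector"
  assumes gm: "is_geom_median k x z" and k: "k > 0" and a: "0 < \<alpha>" "\<alpha> < 1/2" and r: "r > 0"
    and D: "norm (z - \<mu>) > 2*(1-\<alpha>)/(1-2*\<alpha>) * r"
  shows "real (card {j\<in>{1..k}. norm (x j - \<mu>) > r}) > \<alpha> * k"
proof (rule ccontr)
  assume neg: "\<not> ?thesis"
  define G where "G = {j\<in>{1..k}. norm (x j - \<mu>) \<le> r}"
  define B where "B = {j\<in>{1..k}. norm (x j - \<mu>) > r}"
  define D where "D = norm (z - \<mu>)"
  have GB: "{1..k} = G \<union> B" "G \<inter> B = {}" "finite G" "finite B"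
    unfolding G_def B_def by auto
  have "card {1..k} = card G + card B"
    unfolding GB(1) by (rule card_Un_disjoint) (use GB in auto)
  hence card: "card G + card B = k" by simp
  have "(\<Sum>j=1..k. norm (z - x j)) \<le> (\<Sum>j=1..k. norm (\<mu> - x j))"
    using gm unfolding is_geom_median_def by blast
  hence "0 \<le> (\<Sum>j\<in>{1..k}. norm (\<mu> - x j) - norm (z - x j))"
    by (simp add: sum_subtractf)
  also have "\<dots> = (\<Sum>j\<in>G. norm (\<mu> - x j) - norm (z - x j)) + (\<Sum>j\<in>B. norm (\<mu> - x j) - norm (z - x j))"
    unfolding GB(1) by (rule sum.union_disjoint) (use GB in auto)
  also have "\<dots> \<le> (\<Sum>j\<in>G. 2*r - D) + (\<Sum>j\<in>B. D)"
  proof (intro add_mono sum_mono)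
    fix j assume "j \<in> G"
    hence "norm (x j - \<mu>) \<le> r" unfolding G_def by auto
    moreover have "norm (z - \<mu>) \<le> norm (z - x j) + norm (x j - \<mu>)"
      using norm_triangle_ineq[of "z - x j" "x j - \<mu>"] by simp
    moreover have "norm (\<mu> - x j) = norm (x j - \<mu>)" by (rule norm_minus_commute)
    ultimately show "norm (\<mu> - x j) - norm (z - x j) \<le> 2*r - D" unfolding D_def by linarith
  next
    fix j assume "j \<in> B"
    have "norm (\<mu> - x j) \<le> norm (\<mu> - z) + norm (z - x j)"
      using norm_triangle_ineq[of "\<mu> - z" "z - x j"] by simp
    moreover have "norm (\<mu> - z) = norm (z - \<mu>)" by (rule norm_minus_commute)
    ultimately show "norm (\<mu> - x j) - norm (z - x j) \<le> D" unfolding D_def by linarith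
  qed
  also have "\<dots> = real (card G) * (2*r - D) + real (card B) * D" by simp
  finally have main: "0 \<le> real (card G) * (2*r - D) + real (card B) * D" .
  show False
    by (rule arith_banach[of "real (card G)" "real (card B)" "real k" \<alpha> r D])
       (use card k a r neg main D in \<open>auto simp: B_def D_def\<close>)
qed

lemma arith_hilbert:
  fixes g b k \<alpha> r D s :: real
  assumes "g + b = k" "k > 0" "0 < \<alpha>" "\<alpha> < 1/2" "r > 0" "b \<le> \<alpha> * k"
    and "s = sqrt (D^2 - r^2)" "D > r"
    and "g * s \<le> b * D" "D > (1-\<alpha>) * sqrt (1/(1-2*\<alpha>)) * r"
  shows False
proof -
  have rD: "r^2 \<le> D^2" using assms(8,5) by (intro power_mono) auto
  have s0: "s \<ge> 0" using assms(7) rD by simp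
  have D0: "D > 0" using assms by linarith
  have "(1-\<alpha>)*k* s \<le> g* s" using assms(1,6) s0 by (intro mult_right_mono) (auto simp: algebra_simps)
  also have "\<dots> \<le> b*D" by fact
  also have "\<dots> \<le> \<alpha>*k*D" using assms(6) D0 by (intro mult_right_mono) auto
  finally have "k*((1-\<alpha>)* s) \<le> k*(\<alpha>*D)" by (simp add: algebra_simps)
  hence 1: "(1-\<alpha>)* s \<le> \<alpha>*D" using assms(2) by simp
  have "((1-\<alpha>)* s)^2 \<le> (\<alpha>*D)^2" using 1 s0 assms(3,4) by (intro power_mono) auto
  hence 2: "(1-\<alpha>)^2 * (D^2 - r^2) \<le> \<alpha>^2 * D^2"
    using assms(7) rD by (simp add: power_mult_distrib)
  have c0: "(1-\<alpha>) * sqrt (1/(1-2*\<alpha>)) * r \<ge> 0" using assms(3,4,5) by simp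
  have "((1-\<alpha>) * sqrt (1/(1-2*\<alpha>)) * r)^2 < D^2"
    using assms(10) c0 by (intro power_strict_mono) auto
  hence "(1-\<alpha>)^2 * (1/(1-2*\<alpha>)) * r^2 < D^2"
    using assms(3,4) by (simp add: power_mult_distrib)
  hence 3: "(1-\<alpha>)^2 * r^2 < D^2 * (1-2*\<alpha>)"
    using assms(3,4) by (simp add: field_simps)
  show False using 2 3 by (simp add: power2_eq_square algebra_simps)
qed

lemma sqrt_upper_aux:
  fixes A N h :: real
  assumes A: "A > 0" and N: "N \<ge> 0" and eq: "N^2 = A^2 + h"
  shows "N \<le> A + h / (2*A)"
proof -
  have nn: "A + h/(2*A) \<ge> 0"
  proof (rule ccontr)
    assume "\<not> ?thesis"
    hence "2*A*(A + h/(2*A)) < 0" using A by (simp add: mult_pos_neg)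
    hence "2*A^2 + h < 0" using A by (simp add: algebra_simps power2_eq_square)
    moreover have "N^2 \<ge> 0" by simp
    moreover have "A^2 \<ge> 0" by simp
    ultimately show False using eq by linarith
  qed
  have "(A + h/(2*A))^2 = A^2 + h + (h/(2*A))^2"
    using A by (simp add: power2_eq_square field_simps)
  hence "N^2 \<le> (A + h/(2*A))^2" using eq by simp
  thus ?thesis using nn by (rule power2_le_imp_le)
qed

lemma angle_aux:
  fixes D r m s A :: real
  assumes r: "r > 0" "r < D" and m: "0 \<le> m" "m \<le> r^2" and s: "s \<ge> - (sqrt m * D)"
    and A: "A \<ge> 0" "A^2 = m + 2* s + D^2"
  shows "sqrt (D^2 - r^2) * A \<le> D^2 + s"
proof -
  have rD: "r^2 \<le> D^2" using r by (intro power_mono) auto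
  have sm: "sqrt m \<le> r" using m r by (metis real_sqrt_le_mono real_sqrt_abs abs_of_pos)
  have "sqrt m * D \<le> r * D" using sm r by (intro mult_right_mono) auto
  moreover have "r * D < D * D" using r by (intro mult_strict_right_mono) auto
  ultimately have pos: "D^2 + s \<ge> 0" using s by (simp add: power2_eq_square)
  have id: "(D^2+s)^2 - (D^2-r^2)*(m + 2* s + D^2) = (s+r^2)^2 + (r^2-m)*(D^2-r^2)"
    by (simp add: power2_eq_square algebra_simps)
  have "(r^2-m)*(D^2-r^2) \<ge> 0" using m rD by simp
  hence "(D^2-r^2)*(m + 2* s + D^2) \<le> (D^2+s)^2" using id
    by (smt (verit) zero_le_power2)
  moreover have "(sqrt (D^2 - r^2) * A)^2 = (D^2-r^2)*(m + 2* s + D^2)"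
    using rD A by (simp add: power_mult_distrib)
  ultimately have "(sqrt (D^2 - r^2) * A)^2 \<le> (D^2+s)^2" by simp
  thus ?thesis using pos by (rule power2_le_imp_le)
qed

lemma gm_hilbert:
  fixes x :: "nat \<Rightarrow> 'a::real_normed_vector"
  assumes gm: "is_geom_median k x z" and k: "k > 0" and a: "0 < \<alpha>" "\<alpha> < 1/2" and r: "r > 0"
    and H: "hilbert_norm TYPE('a)"
    and Dass: "norm (z - \<mu>) > (1-\<alpha>) * sqrt (1/(1-2*\<alpha>)) * r"
  shows "real (card {j\<in>{1..k}. norm (x j - \<mu>) > r}) > \<alpha> * k"
proof (rule ccontr)
  assume neg: "\<not> ?thesis"
  obtain ip :: "'a \<Rightarrow> 'a \<Rightarrow> real" where sym: "\<And>x y. ip x y = ip y x"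
    and lin: "\<And>y. linear (\<lambda>x. ip x y)" and pos: "\<And>x. x \<noteq> 0 \<Longrightarrow> ip x x > 0"
    and nrm: "\<And>x. norm x = sqrt (ip x x)"
    using H unfolding hilbert_norm_def by blast
  have ipadd: "ip (u+v) w = ip u w + ip v w" for u v w using lin[of w] by (simp add: linear_iff)
  have ipsc: "ip (c *\<^sub>R u) w = c * ip u w" for c u w using lin[of w] by (simp add: linear_iff)
  have ipadd2: "ip w (u+v) = ip w u + ip w v" for u v w using ipadd sym by metis
  have ipsc2: "ip w (c *\<^sub>R u) = c * ip w u" for c u w using ipsc sym by metis
  have ip0: "ip u u \<ge> 0" for u
  proof (cases "u = 0")
    case True
    have "ip ((0::real) *\<^sub>R 0) 0 = 0" by (simp only: ipsc)
    thus ?thesis using True by simp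
  qed (use pos in \<open>auto intro: less_imp_le\<close>)
  have nsq: "(norm u)^2 = ip u u" for u using nrm[of u] ip0[of u] by simp
  have expand: "(norm (u + t *\<^sub>R w))^2 = (norm u)^2 + 2*t*ip u w + t^2 * (norm w)^2" for u t w
  proof -
    have "ip w u = ip u w" by (rule sym)
    thus ?thesis unfolding nsq by (simp add: ipadd ipadd2 ipsc ipsc2 power2_eq_square algebra_simps)
  qed
  have cs: "ip u w \<le> norm u * norm w" for u w
  proof -
    have "(norm (u + w))^2 \<le> (norm u + norm w)^2"
      by (intro power_mono norm_triangle_ineq) auto
    moreover have "(norm (u + 1 *\<^sub>R w))^2 = (norm u)^2 + 2*ip u w + (norm w)^2"
      using expand[of u 1 w] by simp
    ultimately show ?thesis by (simp add: power2_eq_square algebra_simps)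
  qed
  have cs2: "- (norm u * norm w) \<le> ip u w" for u w
  proof -
    have "ip ((-1) *\<^sub>R u) w \<le> norm ((-1) *\<^sub>R u) * norm w" by (rule cs)
    thus ?thesis by (simp only: ipsc) simp
  qed
  define D where "D = norm (z - \<mu>)"
  define w where "w = \<mu> - z"
  have nw: "norm w = D" unfolding w_def D_def by (rule norm_minus_commute)
  have C1: "1 \<le> (1-\<alpha>) * sqrt (1/(1-2*\<alpha>))"
  proof -
    have "(1-\<alpha>) * sqrt (1/(1-2*\<alpha>)) = sqrt ((1-\<alpha>)^2 * (1/(1-2*\<alpha>)))"
    proof -
      have "sqrt ((1-\<alpha>)^2 * (1/(1-2*\<alpha>))) = sqrt ((1-\<alpha>)^2) * sqrt (1/(1-2*\<alpha>))"
        by (rule real_sqrt_mult)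
      thus ?thesis using a by simp
    qed
    moreover have "1 \<le> (1-\<alpha>)^2 * (1/(1-2*\<alpha>))"
      using a by (simp add: field_simps power2_eq_square)
    ultimately show ?thesis by simp
  qed
  have Dr: "D > r"
  proof -
    have "r \<le> (1-\<alpha>) * sqrt (1/(1-2*\<alpha>)) * r" using C1 r by simp
    thus ?thesis using Dass unfolding D_def by linarith
  qed
  define G where "G = {j\<in>{1..k}. norm (x j - \<mu>) \<le> r}"
  define B where "B = {j\<in>{1..k}. norm (x j - \<mu>) > r}"
  have GB: "{1..k} = G \<union> B" "G \<inter> B = {}" "finite G" "finite B"
    unfolding G_def B_def by auto
  have "card {1..k} = card G + card B"
    unfolding GB(1) by (rule card_Un_disjoint) (use GB in auto)
  hence card: "card G + card B = k" by simp
  define aa where "aa j = z - x j" for j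
  define sD where "sD = sqrt (D^2 - r^2)"
  have Gfacts: "norm (aa j) > 0 \<and> ip (aa j) w \<le> - sD * norm (aa j)" if j: "j \<in> G" for j
  proof -
    define v where "v = x j - \<mu>"
    have nv: "norm v \<le> r" using j unfolding G_def v_def by auto
    have av: "aa j = - (v + w)" unfolding aa_def v_def w_def by (simp add: algebra_simps)
    have "D \<le> norm (aa j) + norm v"
      unfolding D_def aa_def v_def using norm_triangle_ineq[of "z - x j" "x j - \<mu>"] by simp
    hence npos: "norm (aa j) > 0" using nv Dr by linarith
    have ipw: "ip (aa j) w = - (ip v w + D^2)"
    proof -
      have "ip (aa j) w = ip ((-1) *\<^sub>R (v + w)) w" unfolding av by simp
      also have "\<dots> = - (ip v w + ip w w)" by (simp only: ipsc ipadd) simp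
      finally show ?thesis using nsq[of w] nw by simp
    qed
    have A2: "(norm (aa j))^2 = (norm v)^2 + 2 * ip v w + D^2"
    proof -
      have "norm (- (v + w)) = norm (v + w)" by (rule norm_minus_cancel)
      thus ?thesis using expand[of v 1 w] nw unfolding av by simp
    qed
    have "sD * norm (aa j) \<le> D^2 + ip v w"
      unfolding sD_def
    proof (rule angle_aux[of r D "(norm v)^2"])
      show "- (sqrt ((norm v)^2) * D) \<le> ip v w" using cs2[of v w] nw by simp
    qed (use r Dr nv A2 in \<open>auto intro: power_mono\<close>)
    thus ?thesis using npos ipw by simp
  qed
  have Gvar: "norm (aa j + t *\<^sub>R w) \<le> norm (aa j) + t * (ip (aa j) w / norm (aa j))
                 + t^2 * (D^2 / (2 * norm (aa j)))" if j: "j \<in> G" for j t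
  proof -
    have A: "norm (aa j) > 0" using Gfacts[OF j] by blast
    have "norm (aa j + t *\<^sub>R w) \<le> norm (aa j) + (2*t*ip (aa j) w + t^2 * D^2) / (2 * norm (aa j))"
      by (rule sqrt_upper_aux) (use A expand[of "aa j" t w] nw in auto)
    also have "\<dots> = norm (aa j) + t * (ip (aa j) w / norm (aa j)) + t^2 * (D^2 / (2 * norm (aa j)))"
      using A by (simp add: field_simps)
    finally show ?thesis .
  qed
  have Bvar: "norm (aa j + t *\<^sub>R w) \<le> norm (aa j) + t * D" if "t \<ge> 0" for j t
  proof -
    have "norm (aa j + t *\<^sub>R w) \<le> norm (aa j) + norm (t *\<^sub>R w)" by (rule norm_triangle_ineq)
    thus ?thesis using that nw by simp
  qed
  define Q where "Q = (\<Sum>j\<in>G. ip (aa j) w / norm (aa j)) + real (card B) * D"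
  define K where "K = (\<Sum>j\<in>G. D^2 / (2 * norm (aa j)))"
  have K0: "K \<ge> 0" unfolding K_def using Gfacts by (intro sum_nonneg) (auto intro: less_imp_le)
  have key: "0 \<le> t * Q + t^2 * K" if t: "t > 0" for t
  proof -
    have "(\<Sum>j=1..k. norm (z - x j)) \<le> (\<Sum>j=1..k. norm ((z + t *\<^sub>R w) - x j))"
      using gm unfolding is_geom_median_def by blast
    moreover have "(z + t *\<^sub>R w) - x j = aa j + t *\<^sub>R w" for j unfolding aa_def by simp
    ultimately have "0 \<le> (\<Sum>j\<in>{1..k}. norm (aa j + t *\<^sub>R w) - norm (aa j))"
      unfolding aa_def by (simp add: sum_subtractf)
    also have "\<dots> = (\<Sum>j\<in>G. norm (aa j + t *\<^sub>R w) - norm (aa j)) + (\<Sum>j\<in>B. norm (aa j + t *\<^sub>R w) - norm (aa j))"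
      unfolding GB(1) by (rule sum.union_disjoint) (use GB in auto)
    also have "\<dots> \<le> (\<Sum>j\<in>G. t * (ip (aa j) w / norm (aa j)) + t^2 * (D^2 / (2 * norm (aa j)))) + (\<Sum>j\<in>B. t * D)"
    proof (intro add_mono sum_mono)
      fix j assume "j \<in> G" thus "norm (aa j + t *\<^sub>R w) - norm (aa j) \<le> t * (ip (aa j) w / norm (aa j)) + t^2 * (D^2 / (2 * norm (aa j)))"
        using Gvar[of j t] by simp
    next
      fix j assume "j \<in> B" thus "norm (aa j + t *\<^sub>R w) - norm (aa j) \<le> t * D"
        using Bvar[of t j] t by simp
    qed
    also have "\<dots> = t * Q + t^2 * K"
      unfolding Q_def K_def by (simp add: sum.distrib sum_distrib_left algebra_simps)
    finally show ?thesis .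
  qed
  have Q0: "Q \<ge> 0"
  proof (rule ccontr)
    assume "\<not> Q \<ge> 0"
    hence Qn: "Q < 0" by simp
    define t where "t = - Q / (K + 1)"
    have t0: "t > 0" unfolding t_def using Qn K0 by (intro divide_pos_pos) auto
    have "Q + t * K = Q / (K + 1)" unfolding t_def using K0 by (simp add: field_simps)
    also have "\<dots> < 0" using Qn K0 by (intro divide_neg_pos) auto
    finally have "t * (Q + t * K) < 0" using t0 by (simp add: mult_pos_neg)
    moreover have "t * (Q + t * K) = t * Q + t^2 * K" by (simp add: power2_eq_square algebra_simps)
    ultimately show False using key[OF t0] by simp
  qed
  have "(\<Sum>j\<in>G. ip (aa j) w / norm (aa j)) \<le> (\<Sum>j\<in>G. - sD)"
  proof (rule sum_mono)
    fix j assume j: "j \<in> G"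
    have "ip (aa j) w \<le> (- sD) * norm (aa j)" using Gfacts[OF j] by simp
    thus "ip (aa j) w / norm (aa j) \<le> - sD" using Gfacts[OF j] by (simp add: divide_le_eq)
  qed
  hence "real (card G) * sD \<le> real (card B) * D" using Q0 unfolding Q_def by simp
  show False
    by (rule arith_hilbert[of "real (card G)" "real (card B)" "real k" \<alpha> r sD D])
       (use card k a r neg Dr Dass \<open>real (card G) * sD \<le> real (card B) * D\<close> in \<open>auto simp: B_def D_def sD_def\<close>)
qed


theorem mainTheorem5:
  fixes M :: "'b measure"
    and X :: "nat \<Rightarrow> 'b \<Rightarrow> 'a::banach"
    and med :: "'b \<Rightarrow> 'a"
    and \<mu> :: 'a
    and \<alpha> p \<epsilon> \<tau> :: real
    and k :: nat
    and J :: "nat set"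
  assumes "prob_space M"
    and "separable_space_type TYPE('a)"
    and "reflexive_space TYPE('a)"
    and "0 < \<alpha>" "\<alpha> < 1/2" "0 < p" "p < \<alpha>" "0 < \<epsilon>"
    and "0 \<le> \<tau>" "\<tau> < (\<alpha> - p) / (1 - p)"
    and "J \<subseteq> {1..k}" "real (card J) = (1 - \<tau>) * real k"
    and "\<And>j. j \<in> {1..k} \<Longrightarrow> X j \<in> borel_measurable M"
    and "prob_space.indep_vars M (\<lambda>_. borel) X J"
    and "\<And>j. j \<in> J \<Longrightarrow> measure M {\<omega> \<in> space M. norm (X j \<omega> - \<mu>) > \<epsilon>} \<le> p"
    and "\<And>\<omega>. \<omega> \<in> space M \<Longrightarrow> is_geom_median k (\<lambda>j. X j \<omega>) (med \<omega>)"
    and "med \<in> borel_measurable M"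
  shows "measure M {\<omega> \<in> space M. norm (med \<omega> - \<mu>) > (2 * (1 - \<alpha>) / (1 - 2 * \<alpha>)) * \<epsilon>}
           \<le> exp (- real k * (1 - \<tau>) * psi ((\<alpha> - \<tau>) / (1 - \<tau>)) p)
       \<and> (hilbert_norm TYPE('a) \<longrightarrow>
           measure M {\<omega> \<in> space M. norm (med \<omega> - \<mu>) > ((1 - \<alpha>) * sqrt (1 / (1 - 2 * \<alpha>))) * \<epsilon>}
           \<le> exp (- real k * (1 - \<tau>) * psi ((\<alpha> - \<tau>) / (1 - \<tau>)) p))"
proof (cases "k = 0")
  case True
  interpret prob_space M by fact
  show ?thesis using True by simp
next
  case False
  hence k: "k > 0" by simp
  have R: "measure M {\<omega> \<in> space M. norm (med \<omega> - \<mu>) > c}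
           \<le> exp (- real k * (1 - \<tau>) * psi ((\<alpha> - \<tau>) / (1 - \<tau>)) p)"
    if imp: "\<And>\<omega>. \<omega> \<in> space M \<Longrightarrow> c < norm (med \<omega> - \<mu>) \<Longrightarrow>
                real (card {j\<in>{1..k}. \<epsilon> < norm (X j \<omega> - \<mu>)}) > \<alpha> * k" for c
    by (rule reduce[OF assms(1,11,12,14,15,6,7,5,9,10) imp])
  show ?thesis
  proof (intro conjI impI)
    show "measure M {\<omega> \<in> space M. norm (med \<omega> - \<mu>) > (2 * (1 - \<alpha>) / (1 - 2 * \<alpha>)) * \<epsilon>}
           \<le> exp (- real k * (1 - \<tau>) * psi ((\<alpha> - \<tau>) / (1 - \<tau>)) p)"
    proof (rule R)
      fix \<omega> assume w: "\<omega> \<in> space M" "2 * (1 - \<alpha>) / (1 - 2 * \<alpha>) * \<epsilon> < norm (med \<omega> - \<mu>)"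
      show "real (card {j\<in>{1..k}. \<epsilon> < norm (X j \<omega> - \<mu>)}) > \<alpha> * k"
        by (rule gm_banach[OF assms(16)[OF w(1)] k assms(4,5,8) w(2)])
    qed
  next
    assume H: "hilbert_norm TYPE('a)"
    show "measure M {\<omega> \<in> space M. norm (med \<omega> - \<mu>) > ((1 - \<alpha>) * sqrt (1 / (1 - 2 * \<alpha>))) * \<epsilon>}
           \<le> exp (- real k * (1 - \<tau>) * psi ((\<alpha> - \<tau>) / (1 - \<tau>)) p)"
    proof (rule R)
      fix \<omega> assume w: "\<omega> \<in> space M" "(1 - \<alpha>) * sqrt (1 / (1 - 2 * \<alpha>)) * \<epsilon> < norm (med \<omega> - \<mu>)"
      show "real (card {j\<in>{1..k}. \<epsilon> < norm (X j \<omega> - \<mu>)}) > \<alpha> * k"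
        by (rule gm_hilbert[OF assms(16)[OF w(1)] k assms(4,5,8) H w(2)])
    qed
  qed
qed


end
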